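(* Let $M=L_1\,C_1\,L_2\,C_2\,L_3$ be a unitary on $\mathbb{C}^2\otimes\mathbb{C}^2\otimes\mathbb{C}^2$, where $L_1,L_2,L_3$ are local unitaries (each of the form $V\otimes W\otimes X$ with $V,W,X$ $2\times2$ unitaries), and each $C_k$ is a CNOT gate acting on some ordered pair of distinct qubits among $A,B,C$ (one qubit as control, another as target) and as the identity on the remaining qubit. Then $\mathrm{sr}(M)\in\{1,2,4\}$.
   Context: $T=|0\rangle\langle0|\otimes I_2+|1\rangle\langle1|\otimes\sigma_1$ is the CNOT gate on two qubits (first control, second target), where $\sigma_1=\begin{bmatrix}0&1\\1&0\end{bmatrix}$. For a matrix $U$ on $\mathbb{C}^2\otimes\mathbb{C}^2\otimes\mathbb{C}^2$ (systems $A,B,C$), its Schmidt rank $\mathrm{sr}(U)$ is the least integer $r$ such that $U=\sum_{j=1}^r A_j\otimes B_j\otimes C_j$ with $A_j,B_j,C_j$ complex $2\times 2$ matrices (i.e. the tensor rank of $U$). *)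

theory Defs
  imports Complex_Main
begin

text \<open>A qubit basis index is a bool (False = |0>, True = |1>). 2x2 matrices are
functions bool => bool => complex; matrices on C^2 (x) C^2 (x) C^2 (systems A,B,C)
are indexed by triples (a,b,c).\<close>

type_synonym mat2 = "bool \<Rightarrow> bool \<Rightarrow> complex"
type_synonym idx3 = "bool \<times> bool \<times> bool"
type_synonym mat8 = "idx3 \<Rightarrow> idx3 \<Rightarrow> complex"

definition mmul2 :: "mat2 \<Rightarrow> mat2 \<Rightarrow> mat2" where
  "mmul2 M N = (\<lambda>i k. \<Sum>j\<in>UNIV. M i j * N j k)"

definition mmul8 :: "mat8 \<Rightarrow> mat8 \<Rightarrow> mat8" where
  "mmul8 M N = (\<lambda>i k. \<Sum>j\<in>UNIV. M i j * N j k)"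

definition adj2 :: "mat2 \<Rightarrow> mat2" where
  "adj2 M = (\<lambda>i j. cnj (M j i))"

definition id2 :: mat2 where
  "id2 = (\<lambda>i j. if i = j then 1 else 0)"

definition unitary2 :: "mat2 \<Rightarrow> bool" where
  "unitary2 V \<longleftrightarrow> mmul2 V (adj2 V) = id2 \<and> mmul2 (adj2 V) V = id2"

definition tensor3 :: "mat2 \<Rightarrow> mat2 \<Rightarrow> mat2 \<Rightarrow> mat8" where
  "tensor3 A B C = (\<lambda>(a,b,c) (a',b',c'). A a a' * B b b' * C c c')"

definition local_unitary :: "mat8 \<Rightarrow> bool" where
  "local_unitary L \<longleftrightarrow> (\<exists>V W X. unitary2 V \<and> unitary2 W \<and> unitary2 X \<and> L = tensor3 V W X)"

definition proj0 :: mat2 where "proj0 = (\<lambda>i j. if i = False \<and> j = False then 1 else 0)"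
definition proj1 :: mat2 where "proj1 = (\<lambda>i j. if i = True \<and> j = True then 1 else 0)"
definition sigma1 :: mat2 where "sigma1 = (\<lambda>i j. if i \<noteq> j then 1 else 0)"

text \<open>Place 2x2 matrices on the qubits: qubit 0 = A, 1 = B, 2 = C.\<close>
definition tensor_at :: "(nat \<Rightarrow> mat2) \<Rightarrow> mat8" where
  "tensor_at f = tensor3 (f 0) (f 1) (f 2)"

definition cnot :: "nat \<Rightarrow> nat \<Rightarrow> mat8" where
  "cnot c t = (\<lambda>i j.
     tensor_at (\<lambda>q. if q = c then proj0 else id2) i j
   + tensor_at (\<lambda>q. if q = c then proj1 else if q = t then sigma1 else id2) i j)"

definition is_cnot :: "mat8 \<Rightarrow> bool" where
  "is_cnot C \<longleftrightarrow> (\<exists>c t. c < 3 \<and> t < 3 \<and> c \<noteq> t \<and> C = cnot c t)"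

definition schmidt_rank :: "mat8 \<Rightarrow> nat" where
  "schmidt_rank U = (LEAST r. \<exists>A B C :: nat \<Rightarrow> mat2.
      U = (\<lambda>i j. \<Sum>k<r. tensor3 (A k) (B k) (C k) i j))"

end

theory Submission
  imports Defs "HOL-Analysis.Analysis"
begin


definition dec :: "mat8 \<Rightarrow> nat \<Rightarrow> bool" where
  "dec T r \<longleftrightarrow> (\<exists>A B C :: nat \<Rightarrow> mat2. T = (\<lambda>i j. \<Sum>k<r. tensor3 (A k) (B k) (C k) i j))"

lemma sr_def: "schmidt_rank T = (LEAST r. dec T r)"
  unfolding schmidt_rank_def dec_def ..

lemma sum_bool: "(\<Sum>x\<in>(UNIV::bool set). f x) = f False + f True"
  by (simp add: UNIV_bool)

lemma sum_idx3: "(\<Sum>x\<in>(UNIV::idx3 set). f x) =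
  f (False,False,False) + f (False,False,True) + f (False,True,False) + f (False,True,True) +
  f (True,False,False) + f (True,False,True) + f (True,True,False) + f (True,True,True)"
proof -
  have "(UNIV::idx3 set) = {(False,False,False), (False,False,True), (False,True,False), (False,True,True),
  (True,False,False), (True,False,True), (True,True,False), (True,True,True)}" (is "_ = ?S") by auto
  have "(\<Sum>x\<in>(UNIV::idx3 set). f x) = (\<Sum>x\<in>?S. f x)" by (simp only: \<open>UNIV = ?S\<close>)
  then show ?thesis by (simp add: algebra_simps)
qed

definition id8 :: mat8 where "id8 = (\<lambda>i j. if i = j then 1 else 0)"

lemma mmul8_tensor3: "mmul8 (tensor3 A B C) (tensor3 A' B' C') =
   tensor3 (mmul2 A A') (mmul2 B B') (mmul2 C C')"
  unfolding mmul8_def tensor3_def mmul2_def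
  by (auto simp: fun_eq_iff sum_idx3 sum_bool algebra_simps)

lemma mmul8_assoc: "mmul8 (mmul8 A B) C = mmul8 A (mmul8 B C)"
  unfolding mmul8_def
  by (auto simp: fun_eq_iff sum_distrib_left sum_distrib_right mult.assoc intro: sum.swap)

lemma mmul8_sum_left: "mmul8 L (\<lambda>i j. \<Sum>k<r. F k i j) = (\<lambda>i j. \<Sum>k<r. mmul8 L (F k) i j)"
  unfolding mmul8_def
  by (auto simp: fun_eq_iff sum_distrib_left intro: sum.swap)

lemma mmul8_sum_right: "mmul8 (\<lambda>i j. \<Sum>k<r. F k i j) L = (\<lambda>i j. \<Sum>k<r. mmul8 (F k) L i j)"
  unfolding mmul8_def
  by (auto simp: fun_eq_iff sum_distrib_right intro: sum.swap)

lemma dec_left: "dec T r \<Longrightarrow> dec (mmul8 (tensor3 V W X) T) r"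
  unfolding dec_def
  by (auto simp: mmul8_sum_left mmul8_tensor3) force

lemma dec_right: "dec T r \<Longrightarrow> dec (mmul8 T (tensor3 V W X)) r"
  unfolding dec_def
  by (auto simp: mmul8_sum_right mmul8_tensor3) force

lemma id8_tensor: "tensor3 id2 id2 id2 = id8"
  unfolding id8_def tensor3_def id2_def by (auto simp: fun_eq_iff)

lemma mmul8_id_left: "mmul8 id8 T = T"
  unfolding mmul8_def id8_def by (simp add: fun_eq_iff if_distrib[where f="\<lambda>x. x * _"] if_distrib[where f="\<lambda>x. _ * x"] cong: if_cong)

lemma mmul8_id_right: "mmul8 T id8 = T"
  unfolding mmul8_def id8_def by (simp add: fun_eq_iff if_distrib[where f="\<lambda>x. x * _"] if_distrib[where f="\<lambda>x. _ * x"] cong: if_cong)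

lemma rank_left:
  assumes "unitary2 V" "unitary2 W" "unitary2 X"
  shows "schmidt_rank (mmul8 (tensor3 V W X) T) = schmidt_rank T"
proof -
  have inv: "mmul8 (tensor3 (adj2 V) (adj2 W) (adj2 X)) (tensor3 V W X) = id8"
    using assms by (simp add: mmul8_tensor3 unitary2_def id8_tensor)
  have "dec (mmul8 (tensor3 V W X) T) r \<longleftrightarrow> dec T r" for r
  proof
    assume "dec (mmul8 (tensor3 V W X) T) r"
    from dec_left[OF this, of "adj2 V" "adj2 W" "adj2 X"]
    show "dec T r" by (simp add: mmul8_assoc[symmetric] inv mmul8_id_left)
  qed (rule dec_left)
  then show ?thesis by (simp add: sr_def)
qed

lemma rank_right:
  assumes "unitary2 V" "unitary2 W" "unitary2 X"
  shows "schmidt_rank (mmul8 T (tensor3 V W X)) = schmidt_rank T"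
proof -
  have inv: "mmul8 (tensor3 V W X) (tensor3 (adj2 V) (adj2 W) (adj2 X)) = id8"
    using assms by (simp add: mmul8_tensor3 unitary2_def id8_tensor)
  have "dec (mmul8 T (tensor3 V W X)) r \<longleftrightarrow> dec T r" for r
  proof
    assume "dec (mmul8 T (tensor3 V W X)) r"
    from dec_right[OF this, of "adj2 V" "adj2 W" "adj2 X"]
    show "dec T r" by (simp add: mmul8_assoc inv mmul8_id_right)
  qed (rule dec_right)
  then show ?thesis by (simp add: sr_def)
qed


lemma mmul2_assoc: "mmul2 (mmul2 A B) C = mmul2 A (mmul2 B C)"
  unfolding mmul2_def by (simp add: fun_eq_iff sum_bool algebra_simps)
lemma adj2_mmul2: "adj2 (mmul2 A B) = mmul2 (adj2 B) (adj2 A)"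
  unfolding mmul2_def adj2_def by (simp add: fun_eq_iff sum_bool algebra_simps)
lemma mmul2_id_left[simp]: "mmul2 id2 A = A"
  unfolding mmul2_def id2_def by (simp add: fun_eq_iff sum_bool)
lemma mmul2_id_right[simp]: "mmul2 A id2 = A"
  unfolding mmul2_def id2_def by (simp add: fun_eq_iff sum_bool)

lemma unitary2_mmul2: "unitary2 A \<Longrightarrow> unitary2 B \<Longrightarrow> unitary2 (mmul2 A B)"
  unfolding unitary2_def adj2_mmul2
  by (metis mmul2_assoc mmul2_id_left mmul2_id_right)

lemma unitary2_id: "unitary2 id2"
  unfolding unitary2_def adj2_def id2_def mmul2_def by (simp add: fun_eq_iff sum_bool)

definition hh :: complex where "hh = complex_of_real (1 / sqrt 2)"
lemma hh_sq: "hh * hh = 1/2"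
proof -
  have r: "1 / sqrt 2 * (1 / sqrt 2) = (1/2::real)" by (simp add: field_simps)
  have "hh * hh = complex_of_real (1 / sqrt 2 * (1 / sqrt 2))" unfolding hh_def
    by (simp only: of_real_mult)
  also have "\<dots> = 1/2" by (simp only: r) simp
  finally show ?thesis .
qed
lemma cnj_hh[simp]: "cnj hh = hh" unfolding hh_def by simp

definition Hd :: mat2 where "Hd = (\<lambda>i j. if i \<and> j then - hh else hh)"

lemma unitary2_Hd: "unitary2 Hd"
  unfolding unitary2_def Hd_def adj2_def mmul2_def id2_def
  by (simp add: fun_eq_iff sum_bool hh_sq)

definition s01 :: "nat \<Rightarrow> nat" where "s01 q = (if q = 0 then 1 else if q = 1 then 0 else q)"
definition s12 :: "nat \<Rightarrow> nat" where "s12 q = (if q = 1 then 2 else if q = 2 then 1 else q)"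

definition P01 :: "mat8 \<Rightarrow> mat8" where
  "P01 T = (\<lambda>(a,b,c) (a',b',c'). T (b,a,c) (b',a',c'))"
definition P12 :: "mat8 \<Rightarrow> mat8" where
  "P12 T = (\<lambda>(a,b,c) (a',b',c'). T (a,c,b) (a',c',b'))"

lemma P01_P01[simp]: "P01 (P01 T) = T" unfolding P01_def by (simp add: fun_eq_iff split_def)
lemma P12_P12[simp]: "P12 (P12 T) = T" unfolding P12_def by (simp add: fun_eq_iff split_def)

lemma P01_tensor3: "P01 (tensor3 A B C) = tensor3 B A C"
  unfolding P01_def tensor3_def by (simp add: fun_eq_iff split_def)
lemma P12_tensor3: "P12 (tensor3 A B C) = tensor3 A C B"
  unfolding P12_def tensor3_def by (simp add: fun_eq_iff split_def)


lemma P01_mmul8: "P01 (mmul8 M N) = mmul8 (P01 M) (P01 N)"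
  unfolding P01_def mmul8_def
  by (auto simp: fun_eq_iff intro!: sum.reindex_bij_witness[where i="\<lambda>(a,b,c). (b,a,c)" and j = "\<lambda>(a,b,c). (b,a,c)"])
lemma P12_mmul8: "P12 (mmul8 M N) = mmul8 (P12 M) (P12 N)"
  unfolding P12_def mmul8_def
  by (auto simp: fun_eq_iff intro!: sum.reindex_bij_witness[where i="\<lambda>(a,b,c). (a,c,b)" and j = "\<lambda>(a,b,c). (a,c,b)"])

lemma s01_eq: "(s01 q = c) = (q = s01 c)" unfolding s01_def by auto
lemma s12_eq: "(s12 q = c) = (q = s12 c)" unfolding s12_def by auto
lemma s01_s01[simp]: "s01 (s01 q) = q" unfolding s01_def by auto
lemma s12_s12[simp]: "s12 (s12 q) = q" unfolding s12_def by auto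
lemma P01_tensor_at: "P01 (tensor_at f) = tensor_at (\<lambda>q. f (s01 q))"
  unfolding tensor_at_def P01_tensor3 by (simp add: s01_def)
lemma P12_tensor_at: "P12 (tensor_at f) = tensor_at (\<lambda>q. f (s12 q))"
  unfolding tensor_at_def P12_tensor3 by (simp add: s12_def)
lemma P01_add: "P01 (\<lambda>i j. A i j + B i j) = (\<lambda>i j. P01 A i j + P01 B i j)"
  unfolding P01_def by (auto simp: fun_eq_iff)
lemma P12_add: "P12 (\<lambda>i j. A i j + B i j) = (\<lambda>i j. P12 A i j + P12 B i j)"
  unfolding P12_def by (auto simp: fun_eq_iff)
lemma P01_cnot: "P01 (cnot c t) = cnot (s01 c) (s01 t)"
  unfolding cnot_def P01_add P01_tensor_at by (simp only: s01_eq)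
lemma P12_cnot: "P12 (cnot c t) = cnot (s12 c) (s12 t)"
  unfolding cnot_def P12_add P12_tensor_at by (simp only: s12_eq)
lemma P01_sum: "P01 (\<lambda>i j. \<Sum>k<r. tensor3 (A k) (B k) (C k) i j) =
   (\<lambda>i j. \<Sum>k<r. tensor3 (B k) (A k) (C k) i j)"
  unfolding P01_def tensor3_def by (auto simp: fun_eq_iff mult_ac)
lemma P12_sum: "P12 (\<lambda>i j. \<Sum>k<r. tensor3 (A k) (B k) (C k) i j) =
   (\<lambda>i j. \<Sum>k<r. tensor3 (A k) (C k) (B k) i j)"
  unfolding P12_def tensor3_def by (auto simp: fun_eq_iff mult_ac)
lemma dec_P01: "dec (P01 T) r = dec T r"
proof -
  have *: "dec T r \<Longrightarrow> dec (P01 T) r" for T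
    unfolding dec_def apply (elim exE) subgoal for A B C
      by (rule exI[of _ B], rule exI[of _ A], rule exI[of _ C]) (simp add: P01_sum) done
  show ?thesis using *[of T] *[of "P01 T"] by auto
qed
lemma dec_P12: "dec (P12 T) r = dec T r"
proof -
  have *: "dec T r \<Longrightarrow> dec (P12 T) r" for T
    unfolding dec_def apply (elim exE) subgoal for A B C
      by (rule exI[of _ A], rule exI[of _ C], rule exI[of _ B]) (simp add: P12_sum) done
  show ?thesis using *[of T] *[of "P12 T"] by auto
qed
lemma sr_P01: "schmidt_rank (P01 T) = schmidt_rank T" by (simp add: sr_def dec_P01)
lemma sr_P12: "schmidt_rank (P12 T) = schmidt_rank T" by (simp add: sr_def dec_P12)

definition Q :: "nat \<Rightarrow> nat \<Rightarrow> nat \<Rightarrow> nat \<Rightarrow> bool" where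
  "Q c1 t1 c2 t2 \<longleftrightarrow> (\<forall>V W X. unitary2 V \<longrightarrow> unitary2 W \<longrightarrow> unitary2 X \<longrightarrow>
     schmidt_rank (mmul8 (cnot c1 t1) (mmul8 (tensor3 V W X) (cnot c2 t2))) \<in> {1,2,4})"

lemma Q_P01: "Q c1 t1 c2 t2 \<Longrightarrow> Q (s01 c1) (s01 t1) (s01 c2) (s01 t2)"
  unfolding Q_def
proof (intro allI impI)
  fix V W X assume q: "\<forall>V W X. unitary2 V \<longrightarrow> unitary2 W \<longrightarrow> unitary2 X \<longrightarrow>
     schmidt_rank (mmul8 (cnot c1 t1) (mmul8 (tensor3 V W X) (cnot c2 t2))) \<in> {1,2,4}"
    and u: "unitary2 V" "unitary2 W" "unitary2 X"
  have "P01 (mmul8 (cnot (s01 c1) (s01 t1)) (mmul8 (tensor3 V W X) (cnot (s01 c2) (s01 t2))))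
     = mmul8 (cnot c1 t1) (mmul8 (tensor3 W V X) (cnot c2 t2))"
    by (simp add: P01_mmul8 P01_cnot P01_tensor3)
  then show "schmidt_rank (mmul8 (cnot (s01 c1) (s01 t1)) (mmul8 (tensor3 V W X) (cnot (s01 c2) (s01 t2)))) \<in> {1,2,4}"
    using q u by (metis sr_P01)
qed

lemma Q_P12: "Q c1 t1 c2 t2 \<Longrightarrow> Q (s12 c1) (s12 t1) (s12 c2) (s12 t2)"
  unfolding Q_def
proof (intro allI impI)
  fix V W X assume q: "\<forall>V W X. unitary2 V \<longrightarrow> unitary2 W \<longrightarrow> unitary2 X \<longrightarrow>
     schmidt_rank (mmul8 (cnot c1 t1) (mmul8 (tensor3 V W X) (cnot c2 t2))) \<in> {1,2,4}"
    and u: "unitary2 V" "unitary2 W" "unitary2 X"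
  have "P12 (mmul8 (cnot (s12 c1) (s12 t1)) (mmul8 (tensor3 V W X) (cnot (s12 c2) (s12 t2))))
     = mmul8 (cnot c1 t1) (mmul8 (tensor3 V X W) (cnot c2 t2))"
    by (simp add: P12_mmul8 P12_cnot P12_tensor3)
  then show "schmidt_rank (mmul8 (cnot (s12 c1) (s12 t1)) (mmul8 (tensor3 V W X) (cnot (s12 c2) (s12 t2)))) \<in> {1,2,4}"
    using q u by (metis sr_P12)
qed


lemma mmul8_add_left: "mmul8 (\<lambda>i j. A i j + B i j) C = (\<lambda>i j. mmul8 A C i j + mmul8 B C i j)"
  unfolding mmul8_def by (simp add: fun_eq_iff algebra_simps sum.distrib)
lemma mmul8_add_right: "mmul8 C (\<lambda>i j. A i j + B i j) = (\<lambda>i j. mmul8 C A i j + mmul8 C B i j)"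
  unfolding mmul8_def by (simp add: fun_eq_iff algebra_simps sum.distrib)
lemma mmul8_tensor_at: "mmul8 (tensor_at f) (tensor_at g) = tensor_at (\<lambda>q. mmul2 (f q) (g q))"
  unfolding tensor_at_def mmul8_tensor3 ..

definition Hq :: "nat \<Rightarrow> nat \<Rightarrow> nat \<Rightarrow> mat2" where
  "Hq c t q = (if q = c \<or> q = t then Hd else id2)"

lemma HP0H: "mmul2 Hd (mmul2 proj0 Hd) = (\<lambda>i j. 1/2)"
  unfolding mmul2_def Hd_def proj0_def by (simp add: fun_eq_iff sum_bool hh_sq)
lemma HP1H: "mmul2 Hd (mmul2 proj1 Hd) = (\<lambda>i j. if i = j then 1/2 else -1/2)"
  unfolding mmul2_def Hd_def proj1_def by (simp add: fun_eq_iff sum_bool hh_sq)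
lemma HsH: "mmul2 Hd (mmul2 sigma1 Hd) = (\<lambda>i j. if i = j then (if i then -1 else 1) else 0)"
  unfolding mmul2_def Hd_def sigma1_def by (simp add: fun_eq_iff sum_bool hh_sq)
lemma HH: "mmul2 Hd Hd = id2"
  unfolding mmul2_def Hd_def id2_def by (simp add: fun_eq_iff sum_bool hh_sq)

lemma conj_cnot: "mmul8 (tensor_at H) (mmul8 (cnot c t) (tensor_at H)) =
  (\<lambda>i j. tensor_at (\<lambda>q. mmul2 (H q) (mmul2 (if q = c then proj0 else id2) (H q))) i j +
         tensor_at (\<lambda>q. mmul2 (H q) (mmul2 (if q = c then proj1 else if q = t then sigma1 else id2) (H q))) i j)"
  unfolding cnot_def mmul8_add_left mmul8_add_right mmul8_tensor_at ..


lemma ext8: "(\<And>a b c a' b' c'. F (a,b,c) (a',b',c') = G (a,b,c) (a',b',c')) \<Longrightarrow> F = G"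
  by (auto simp: fun_eq_iff)
lemma flip01: "cnot 1 0 = mmul8 (tensor_at (Hq 0 1)) (mmul8 (cnot 0 1) (tensor_at (Hq 0 1)))"
  unfolding conj_cnot
  apply (simp add: Hq_def tensor_at_def HP0H HP1H HsH HH cnot_def)
  apply (rule ext8)
  apply (simp add: tensor3_def proj0_def proj1_def sigma1_def id2_def)
  done
lemma flip02: "cnot 2 0 = mmul8 (tensor_at (Hq 0 2)) (mmul8 (cnot 0 2) (tensor_at (Hq 0 2)))"
  unfolding conj_cnot
  apply (simp add: Hq_def tensor_at_def HP0H HP1H HsH HH cnot_def)
  apply (rule ext8)
  apply (simp add: tensor3_def proj0_def proj1_def sigma1_def id2_def)
  done
lemma flip10: "cnot 0 1 = mmul8 (tensor_at (Hq 1 0)) (mmul8 (cnot 1 0) (tensor_at (Hq 1 0)))"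
  unfolding conj_cnot
  apply (simp add: Hq_def tensor_at_def HP0H HP1H HsH HH cnot_def)
  apply (rule ext8)
  apply (simp add: tensor3_def proj0_def proj1_def sigma1_def id2_def)
  done
lemma flip12: "cnot 2 1 = mmul8 (tensor_at (Hq 1 2)) (mmul8 (cnot 1 2) (tensor_at (Hq 1 2)))"
  unfolding conj_cnot
  apply (simp add: Hq_def tensor_at_def HP0H HP1H HsH HH cnot_def)
  apply (rule ext8)
  apply (simp add: tensor3_def proj0_def proj1_def sigma1_def id2_def)
  done
lemma flip20: "cnot 0 2 = mmul8 (tensor_at (Hq 2 0)) (mmul8 (cnot 2 0) (tensor_at (Hq 2 0)))"
  unfolding conj_cnot
  apply (simp add: Hq_def tensor_at_def HP0H HP1H HsH HH cnot_def)
  apply (rule ext8)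
  apply (simp add: tensor3_def proj0_def proj1_def sigma1_def id2_def)
  done
lemma flip21: "cnot 1 2 = mmul8 (tensor_at (Hq 2 1)) (mmul8 (cnot 2 1) (tensor_at (Hq 2 1)))"
  unfolding conj_cnot
  apply (simp add: Hq_def tensor_at_def HP0H HP1H HsH HH cnot_def)
  apply (rule ext8)
  apply (simp add: tensor3_def proj0_def proj1_def sigma1_def id2_def)
  done

lemma flip_cnot:
  assumes "c < 3" "t < 3" "c \<noteq> t"
  shows "cnot t c = mmul8 (tensor_at (Hq c t)) (mmul8 (cnot c t) (tensor_at (Hq c t)))"
proof -
  have "(c,t) \<in> {(0,1),(0,2),(1,0),(1,2),(2,0),(2,1)}" using assms by auto
  then show ?thesis using flip01 flip02 flip10 flip12 flip20 flip21 by auto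
qed


lemma unitary_Hq: "unitary2 (Hq c t q)"
  unfolding Hq_def using unitary2_Hd unitary2_id by auto

lemma Hq_tensor: "tensor_at (Hq c t) = tensor3 (Hq c t 0) (Hq c t 1) (Hq c t 2)"
  unfolding tensor_at_def ..

lemma Q_flip1:
  assumes "c < 3" "t < 3" "c \<noteq> t" "Q c t c2 t2"
  shows "Q t c c2 t2"
  unfolding Q_def
proof (intro allI impI)
  fix V W X assume u: "unitary2 V" "unitary2 W" "unitary2 X"
  define H0 where "H0 = Hq c t 0"
  define H1 where "H1 = Hq c t 1"
  define H2 where "H2 = Hq c t 2"
  have uh: "unitary2 H0" "unitary2 H1" "unitary2 H2" unfolding H0_def H1_def H2_def by (rule unitary_Hq)+
  have "mmul8 (cnot t c) (mmul8 (tensor3 V W X) (cnot c2 t2)) =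
    mmul8 (tensor3 H0 H1 H2) (mmul8 (cnot c t) (mmul8 (tensor3 (mmul2 H0 V) (mmul2 H1 W) (mmul2 H2 X)) (cnot c2 t2)))"
    unfolding flip_cnot[OF assms(1-3)] Hq_tensor H0_def[symmetric] H1_def[symmetric] H2_def[symmetric]
      mmul8_tensor3[symmetric] by (simp only: mmul8_assoc)
  then have "schmidt_rank (mmul8 (cnot t c) (mmul8 (tensor3 V W X) (cnot c2 t2))) =
    schmidt_rank (mmul8 (cnot c t) (mmul8 (tensor3 (mmul2 H0 V) (mmul2 H1 W) (mmul2 H2 X)) (cnot c2 t2)))"
    using rank_left[OF uh] by simp
  also have "\<dots> \<in> {1,2,4}" using assms(4) unfolding Q_def
    using unitary2_mmul2[OF uh(1) u(1)] unitary2_mmul2[OF uh(2) u(2)] unitary2_mmul2[OF uh(3) u(3)] by blast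
  finally show "schmidt_rank (mmul8 (cnot t c) (mmul8 (tensor3 V W X) (cnot c2 t2))) \<in> {1,2,4}" .
qed

lemma Q_flip2:
  assumes "c < 3" "t < 3" "c \<noteq> t" "Q c1 t1 c t"
  shows "Q c1 t1 t c"
  unfolding Q_def
proof (intro allI impI)
  fix V W X assume u: "unitary2 V" "unitary2 W" "unitary2 X"
  define H0 where "H0 = Hq c t 0"
  define H1 where "H1 = Hq c t 1"
  define H2 where "H2 = Hq c t 2"
  have uh: "unitary2 H0" "unitary2 H1" "unitary2 H2" unfolding H0_def H1_def H2_def by (rule unitary_Hq)+
  have "mmul8 (cnot c1 t1) (mmul8 (tensor3 V W X) (cnot t c)) =
    mmul8 (mmul8 (cnot c1 t1) (mmul8 (tensor3 (mmul2 V H0) (mmul2 W H1) (mmul2 X H2)) (cnot c t))) (tensor3 H0 H1 H2)"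
    unfolding flip_cnot[OF assms(1-3)] Hq_tensor H0_def[symmetric] H1_def[symmetric] H2_def[symmetric]
      mmul8_tensor3[symmetric] by (simp only: mmul8_assoc)
  then have "schmidt_rank (mmul8 (cnot c1 t1) (mmul8 (tensor3 V W X) (cnot t c))) =
    schmidt_rank (mmul8 (cnot c1 t1) (mmul8 (tensor3 (mmul2 V H0) (mmul2 W H1) (mmul2 X H2)) (cnot c t)))"
    using rank_right[OF uh] by simp
  also have "\<dots> \<in> {1,2,4}" using assms(4) unfolding Q_def
    using unitary2_mmul2[OF u(1) uh(1)] unitary2_mmul2[OF u(2) uh(2)] unitary2_mmul2[OF u(3) uh(3)] by blast
  finally show "schmidt_rank (mmul8 (cnot c1 t1) (mmul8 (tensor3 V W X) (cnot t c))) \<in> {1,2,4}" .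
qed


lemma uni_row: "unitary2 V \<Longrightarrow> V x False * cnj (V z False) + V x True * cnj (V z True) = (if x = z then 1 else 0)"
  unfolding unitary2_def
  by (drule conjunct1, drule fun_cong[of _ _ x], drule fun_cong[of _ _ z]) (simp add: mmul2_def adj2_def id2_def sum_bool)

lemma uni_col: "unitary2 V \<Longrightarrow> cnj (V False x) * V False z + cnj (V True x) * V True z = (if x = z then 1 else 0)"
  unfolding unitary2_def
  by (drule conjunct2, drule fun_cong[of _ _ x], drule fun_cong[of _ _ z]) (simp add: mmul2_def adj2_def id2_def sum_bool)

lemma cnj_mult_self_zero: "z * cnj z = 0 \<Longrightarrow> (z::complex) = 0"
  by (simp)

lemma zero_struct:
  assumes u: "unitary2 V" and z: "V False False = 0 \<or> V False True = 0 \<or> V True False = 0 \<or> V True True = 0"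
  shows "(V False True = 0 \<and> V True False = 0) \<or> (V False False = 0 \<and> V True True = 0)"
proof -
  have r0: "V False False * cnj (V False False) + V False True * cnj (V False True) = 1" using uni_row[OF u, of False False] by simp
  have r1: "V True False * cnj (V True False) + V True True * cnj (V True True) = 1" using uni_row[OF u, of True True] by simp
  have ro: "V False False * cnj (V True False) + V False True * cnj (V True True) = 0" using uni_row[OF u, of False True] by simp
  have c0: "cnj (V False False) * V False False + cnj (V True False) * V True False = 1" using uni_col[OF u, of False False] by simp
  have c1: "cnj (V False True) * V False True + cnj (V True True) * V True True = 1" using uni_col[OF u, of True True] by simp
  have co: "cnj (V False False) * V False True + cnj (V True False) * V True True = 0" using uni_col[OF u, of False True] by simp
  consider "V False False = 0" | "V False True = 0" | "V True False = 0" | "V True True = 0" using z by blast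
  then show ?thesis
  proof cases
    case 1
    then have "V False True \<noteq> 0" using r0 by auto
    moreover have "V False True * cnj (V True True) = 0" using ro 1 by simp
    ultimately have "V True True = 0" by simp
    then show ?thesis using 1 by simp
  next
    case 2
    then have "V False False \<noteq> 0" using r0 by auto
    moreover have "V False False * cnj (V True False) = 0" using ro 2 by simp
    ultimately have "V True False = 0" by simp
    then show ?thesis using 2 by simp
  next
    case 3
    then have "V False False \<noteq> 0" using c0 by auto
    moreover have "cnj (V False False) * V False True = 0" using co 3 by simp
    ultimately have "V False True = 0" by simp
    then show ?thesis using 3 by simp
  next
    case 4
    then have "V True False \<noteq> 0" using r1 by auto
    moreover have "V False False * cnj (V True False) = 0" using ro 4 by simp
    ultimately have "V False False = 0" by simp
    then show ?thesis using 4 by simp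
  qed
qed

lemma re_imag: "Re (z - cnj z) = 0" by simp

lemma key_re:
  assumes u: "unitary2 W"
  shows "Re (cnj (W False False + W True True) * (W False True + W True False)) = 0"
    and "Re (cnj (W False False - W True True) * (W False True - W True False)) = 0"
proof -
  define p q r s where "p = W False False" "q = W False True" "r = W True False" "s = W True True"
  have e1: "p * cnj r + q * cnj s = 0" using uni_row[OF u, of False True] by (simp add: p_q_r_s_def)
  have e2: "cnj p * q + cnj r * s = 0" using uni_col[OF u, of False True] by (simp add: p_q_r_s_def)
  have "cnj (p + s) * (q + r) = (cnj p * q + cnj r * s) + cnj (p * cnj r + q * cnj s)
        + (cnj s * r - cnj (cnj s * r)) + (cnj s * q - cnj (cnj s * q))"
    by (simp add: algebra_simps)
  then have "Re (cnj (p + s) * (q + r)) = 0" using e1 e2 by (simp only: plus_complex.sel) simp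
  then show "Re (cnj (W False False + W True True) * (W False True + W True False)) = 0"
    by (simp add: p_q_r_s_def)
  have "cnj (p - s) * (q - r) = (cnj p * q + cnj r * s) - cnj (p * cnj r + q * cnj s)
        + (cnj s * r - cnj (cnj s * r)) - (cnj s * q - cnj (cnj s * q))"
    by (simp add: algebra_simps)
  then have "Re (cnj (p - s) * (q - r)) = 0" using e1 e2 by (simp only: plus_complex.sel minus_complex.sel) simp
  then show "Re (cnj (W False False - W True True) * (W False True - W True False)) = 0"
    by (simp add: p_q_r_s_def)
qed

lemma re_zero_lemma:
  fixes z w :: complex
  assumes "Re (cnj z * w) = 0" and "w = z \<or> w = - z"
  shows "z = 0 \<and> w = 0"
proof -
  have "Re (cnj z * w) = Re z * Re z + Im z * Im z \<or> Re (cnj z * w) = -(Re z * Re z + Im z * Im z)"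
    using assms(2) by auto
  then have h: "Re z * Re z + Im z * Im z = 0" using assms(1) by linarith
  then have "Re z = 0 \<and> Im z = 0" by (simp add: sum_squares_eq_zero_iff)
  then have "z = 0" by (simp add: complex_eq_iff)
  then show ?thesis using assms by auto
qed

definition sg :: "bool \<Rightarrow> bool \<Rightarrow> complex" where "sg u x = (if u \<and> x then -1 else 1)"
definition lam :: "mat2 \<Rightarrow> bool \<Rightarrow> bool \<Rightarrow> complex" where
  "lam W s t = (\<Sum>x\<in>UNIV. \<Sum>y\<in>UNIV. sg s x * sg t y * W x y)"

lemma lam_zero:
  assumes u: "unitary2 W" and z: "lam W s t = 0"
  shows "(W True True = - W False False \<and> W True False = - W False True) \<or>
         (W True True = W False False \<and> W True False = W False True)"
proof -
  define p q r s' where "p = W False False" "q = W False True" "r = W True False" "s' = W True True"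
  note k = key_re[OF u, folded p_q_r_s'_def]
  have "(s = t \<and> (q + r = p + s' \<or> q + r = - (p + s'))) \<or> (s \<noteq> t \<and> (q - r = p - s' \<or> q - r = - (p - s')))"
    using z by (cases s; cases t) (auto simp: lam_def sg_def sum_bool p_q_r_s'_def algebra_simps eq_neg_iff_add_eq_0)
  then show ?thesis
  proof
    assume "s = t \<and> (q + r = p + s' \<or> q + r = - (p + s'))"
    then have "p + s' = 0 \<and> q + r = 0" using re_zero_lemma[OF k(1)] by blast
    then show ?thesis unfolding p_q_r_s'_def by (auto simp: eq_neg_iff_add_eq_0 add.commute)
  next
    assume "s \<noteq> t \<and> (q - r = p - s' \<or> q - r = - (p - s'))"
    then have "p - s' = 0 \<and> q - r = 0" using re_zero_lemma[OF k(2)] by blast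
    then show ?thesis unfolding p_q_r_s'_def by auto
  qed
qed


lemma la4:
  fixes a b :: "nat \<Rightarrow> 'i::finite \<Rightarrow> 'a::field"
  assumes h: "\<And>i j. (\<Sum>k<r. a k i * b k j) = (if i = j then 1 else 0)"
  shows "CARD('i) \<le> r"
proof -
  define bv where "bv k = (\<chi> j. b k j)" for k
  define B where "B = bv ` {..<r}"
  have ax: "axis i 1 = (\<Sum>k<r. a k i *s bv k)" for i
    by (simp add: vec_eq_iff axis_def bv_def sum_component h)
  have "cart_basis \<subseteq> vec.span B"
  proof
    fix x assume "x \<in> (cart_basis :: ('a^'i) set)"
    then obtain i where "x = axis i 1" unfolding cart_basis_def by auto
    then have "x = (\<Sum>k<r. a k i *s bv k)" using ax by simp
    also have "\<dots> \<in> vec.span B" unfolding B_def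
      by (rule vec.span_sum, rule vec.span_scale, rule vec.span_base) auto
    finally show "x \<in> vec.span B" .
  qed
  then have "vec.span cart_basis \<subseteq> vec.span B"
    by (metis vec.span_mono vec.span_span)
  then have "(UNIV :: ('a^'i) set) \<subseteq> vec.span B" by (simp add: vec.span_Basis)
  then have "vec.dim (UNIV :: ('a^'i) set) \<le> card B"
    by (intro vec.span_card_ge_dim) (auto simp: B_def)
  moreover have "card B \<le> r" unfolding B_def
    by (metis card_image_le card_lessThan finite_lessThan)
  ultimately show ?thesis by (simp add: card_cart_basis)
qed


definition pw :: "mat2 \<Rightarrow> mat2 \<Rightarrow> mat2 \<Rightarrow> mat8" where
  "pw \<alpha> \<beta> \<gamma> = (\<lambda>(a,b,c) (a',b',c'). \<alpha> a a' * \<beta> b b' * \<gamma> c c')"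
definition pair3 :: "mat2 \<Rightarrow> mat2 \<Rightarrow> mat2 \<Rightarrow> mat8 \<Rightarrow> complex" where
  "pair3 \<alpha> \<beta> \<gamma> T = (\<Sum>x\<in>UNIV. \<Sum>y\<in>UNIV. pw \<alpha> \<beta> \<gamma> x y * T x y)"
definition pair2 :: "mat2 \<Rightarrow> mat2 \<Rightarrow> complex" where
  "pair2 \<alpha> A = (\<Sum>x\<in>UNIV. \<Sum>y\<in>UNIV. \<alpha> x y * A x y)"

lemma pair3_tensor3: "pair3 \<alpha> \<beta> \<gamma> (tensor3 A B C) = pair2 \<alpha> A * pair2 \<beta> B * pair2 \<gamma> C"
  unfolding pair3_def pair2_def pw_def tensor3_def by (simp add: sum_idx3 sum_bool algebra_simps)

lemma pair3_sum: "pair3 \<alpha> \<beta> \<gamma> (\<lambda>i j. \<Sum>k<r. F k i j) = (\<Sum>k<r. pair3 \<alpha> \<beta> \<gamma> (F k))"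
proof -
  have "pair3 \<alpha> \<beta> \<gamma> (\<lambda>i j. \<Sum>k<r. F k i j) = (\<Sum>x\<in>UNIV. \<Sum>y\<in>UNIV. \<Sum>k<r. pw \<alpha> \<beta> \<gamma> x y * F k x y)"
    unfolding pair3_def by (simp add: sum_distrib_left)
  also have "\<dots> = (\<Sum>x\<in>UNIV. \<Sum>k<r. \<Sum>y\<in>UNIV. pw \<alpha> \<beta> \<gamma> x y * F k x y)"
    by (rule sum.cong[OF refl], rule sum.swap)
  also have "\<dots> = (\<Sum>k<r. \<Sum>x\<in>UNIV. \<Sum>y\<in>UNIV. pw \<alpha> \<beta> \<gamma> x y * F k x y)"
    by (rule sum.swap)
  finally show ?thesis unfolding pair3_def .
qed

lemma lower4:
  fixes \<alpha> \<beta> \<gamma> :: "bool \<times> bool \<Rightarrow> mat2"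
  assumes d: "dec T r"
    and h: "\<And>i j. pair3 (\<alpha> i) (\<beta> j) (\<gamma> i) T = (if i = j then 1 else 0)"
  shows "4 \<le> r"
proof -
  obtain A B C where T: "T = (\<lambda>i j. \<Sum>k<r. tensor3 (A k) (B k) (C k) i j)" using d unfolding dec_def by blast
  have "(\<Sum>k<r. (pair2 (\<alpha> i) (A k) * pair2 (\<gamma> i) (C k)) * pair2 (\<beta> j) (B k)) = (if i = j then 1 else 0)" for i j
    using h[of i j] unfolding T pair3_sum pair3_tensor3 by (simp add: mult_ac)
  from la4[where a="\<lambda>k i. pair2 (\<alpha> i) (A k) * pair2 (\<gamma> i) (C k)" and b="\<lambda>k j. pair2 (\<beta> j) (B k)", OF this]
  show ?thesis by simp
qed

lemma rank4: "dec T 4 \<Longrightarrow> (\<And>r. dec T r \<Longrightarrow> 4 \<le> r) \<Longrightarrow> schmidt_rank T = 4"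
  unfolding sr_def by (rule Least_equality) auto

lemma dec0: "dec T 0 \<Longrightarrow> T = (\<lambda>i j. 0)"
  unfolding dec_def by auto

lemma rank12: assumes "dec T 2" "T \<noteq> (\<lambda>i j. 0)" shows "schmidt_rank T \<in> {1,2}"
proof -
  have le: "schmidt_rank T \<le> 2" unfolding sr_def by (rule Least_le) (rule assms(1))
  have "dec T (schmidt_rank T)" unfolding sr_def by (rule LeastI) (rule assms(1))
  then have "schmidt_rank T \<noteq> 0" using dec0 assms(2) by metis
  then show ?thesis using le by auto
qed

lemma dec2I: "T = (\<lambda>i j. tensor3 A1 B1 C1 i j + tensor3 A2 B2 C2 i j) \<Longrightarrow> dec T 2"
  unfolding dec_def
  by (rule exI[of _ "\<lambda>k. if k = 0 then A1 else A2"], rule exI[of _ "\<lambda>k. if k = 0 then B1 else B2"],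
      rule exI[of _ "\<lambda>k. if k = 0 then C1 else C2"]) (simp add: numeral_2_eq_2)

definition pm :: "(idx3 \<Rightarrow> idx3) \<Rightarrow> mat8" where "pm f = (\<lambda>i j. if j = f i then 1 else 0)"

lemma mmul8_pm_left: "mmul8 (pm f) M = (\<lambda>i k. M (f i) k)"
  unfolding mmul8_def pm_def
  by (simp add: fun_eq_iff if_distrib[where f="\<lambda>x. x * _"] cong: if_cong)

lemma mmul8_pm_right: "(\<And>x. g (g x) = x) \<Longrightarrow> mmul8 M (pm g) = (\<lambda>i k. M i (g k))"
proof -
  assume inv: "\<And>x. g (g x) = x"
  have e: "(k = g j) = (j = g k)" for k j using inv by metis
  show ?thesis unfolding mmul8_def pm_def
    by (simp add: fun_eq_iff e if_distrib[where f="\<lambda>x. _ * x"] cong: if_cong)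
qed

definition f01 :: "idx3 \<Rightarrow> idx3" where "f01 = (\<lambda>(a,b,c). (a, b \<noteq> a, c))"
definition f10 :: "idx3 \<Rightarrow> idx3" where "f10 = (\<lambda>(a,b,c). (a \<noteq> b, b, c))"
definition f12 :: "idx3 \<Rightarrow> idx3" where "f12 = (\<lambda>(a,b,c). (a, b, c \<noteq> b))"


lemma cnot01_pm: "cnot 0 1 = pm f01"
  by (rule ext8) (auto simp: cnot_def pm_def f01_def tensor_at_def tensor3_def proj0_def proj1_def sigma1_def id2_def)
lemma cnot10_pm: "cnot 1 0 = pm f10"
  by (rule ext8) (auto simp: cnot_def pm_def f10_def tensor_at_def tensor3_def proj0_def proj1_def sigma1_def id2_def)
lemma cnot12_pm: "cnot 1 2 = pm f12"
  by (rule ext8) (auto simp: cnot_def pm_def f12_def tensor_at_def tensor3_def proj0_def proj1_def sigma1_def id2_def)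

lemma TS_formula: "mmul8 (cnot 0 1) (mmul8 (tensor3 V W X) (cnot 0 1)) =
  (\<lambda>(a,b,c) (a',b',c'). V a a' * W (b \<noteq> a) (b' \<noteq> a') * X c c')"
  unfolding cnot01_pm mmul8_pm_left
  by (subst mmul8_pm_right) (auto simp: f01_def fun_eq_iff tensor3_def)

lemma TD_formula: "mmul8 (cnot 1 0) (mmul8 (tensor3 V W X) (cnot 1 2)) =
  (\<lambda>(a,b,c) (a',b',c'). V (a \<noteq> b) a' * W b b' * X c (c' \<noteq> b'))"
  unfolding cnot10_pm cnot12_pm mmul8_pm_left
  by (subst mmul8_pm_right) (auto simp: f10_def f12_def fun_eq_iff tensor3_def)


definition TSf :: "mat2 \<Rightarrow> mat2 \<Rightarrow> mat2 \<Rightarrow> mat8" where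
  "TSf V W X = (\<lambda>(a,b,c) (a',b',c'). V a a' * W (b \<noteq> a) (b' \<noteq> a') * X c c')"

lemma exists_nz: "unitary2 V \<Longrightarrow> \<exists>x. V False x \<noteq> 0"
  using uni_row[of V False False] by (metis mult_zero_left add_0 zero_neq_one)

lemma dec4I: "T = (\<lambda>i j. tensor3 Aa Ba Ca i j + tensor3 Ab Bb Cb i j + tensor3 Ac Bc Cc i j + tensor3 Ad Bd Cd i j) \<Longrightarrow> dec T 4"
  unfolding dec_def
  by (rule exI[of _ "\<lambda>k. if k = 0 then Aa else if k = 1 then Ab else if k = 2 then Ac else Ad"],
      rule exI[of _ "\<lambda>k. if k = 0 then Ba else if k = 1 then Bb else if k = 2 then Bc else Bd"],
      rule exI[of _ "\<lambda>k. if k = 0 then Ca else if k = 1 then Cb else if k = 2 then Cc else Cd"])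
     (simp add: eval_nat_numeral add.assoc)

lemma dec2J: "T = (\<lambda>i j. tensor3 Aa Ba Ca i j + tensor3 Ab Bb Cb i j) \<Longrightarrow> dec T 2"
  by (rule dec2I)

lemma TS_nz: assumes "unitary2 V" "unitary2 W" "unitary2 X" shows "TSf V W X \<noteq> (\<lambda>i j. 0)"
proof
  obtain x y z where n: "V False x \<noteq> 0" "W False y \<noteq> 0" "X False z \<noteq> 0" using exists_nz assms by metis
  assume "TSf V W X = (\<lambda>i j. 0)"
  then have "TSf V W X (False, False, False) (x, y \<noteq> x, z) = 0" by simp
  then show False using n unfolding TSf_def by (cases x; cases y) auto
qed

lemma TS_dec4: "dec (TSf V W X) 4"
  apply (rule dec4I[where Aa="\<lambda>x y. if x = False \<and> y = False then V x y else 0" and Ba = "\<lambda>x y. W x y" and Ca = X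
    and Ab="\<lambda>x y. if x = False \<and> y = True then V x y else 0" and Bb = "\<lambda>x y. W x (\<not> y)" and Cb = X
    and Ac="\<lambda>x y. if x = True \<and> y = False then V x y else 0" and Bc = "\<lambda>x y. W (\<not> x) y" and Cc = X
    and Ad="\<lambda>x y. if x = True \<and> y = True then V x y else 0" and Bd = "\<lambda>x y. W (\<not> x) (\<not> y)" and Cd = X])
  apply (rule ext8)
  apply (auto simp: TSf_def tensor3_def)
  done

lemma factor_S: "pair3 \<alpha> \<beta> \<gamma> (TSf V W X) = pair2 \<gamma> X *
   (\<Sum>a\<in>UNIV. \<Sum>a'\<in>UNIV. \<alpha> a a' * V a a' * (\<Sum>b\<in>UNIV. \<Sum>b'\<in>UNIV. \<beta> b b' * W (b \<noteq> a) (b' \<noteq> a')))"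
  unfolding pair3_def pair2_def pw_def TSf_def by (simp add: sum_idx3 sum_bool algebra_simps)

lemma inner_S: "(\<Sum>b\<in>UNIV. \<Sum>b'\<in>UNIV. sg s b * sg t b' * W (b \<noteq> a) (b' \<noteq> a')) = sg s a * sg t a' * lam W s t"
  unfolding lam_def sg_def by (cases a; cases a'; cases s; cases t) (simp_all add: sum_bool algebra_simps)

lemma TS_lower:
  assumes u: "unitary2 X" and nzV: "\<And>x y. V x y \<noteq> 0" and nzl: "\<And>s t. lam W s t \<noteq> 0"
    and d: "dec (TSf V W X) r"
  shows "4 \<le> r"
proof (rule lower4[OF d])
  fix i j :: "bool \<times> bool"
  obtain u v where i: "i = (u,v)" by (cases i)
  obtain s t where j: "j = (s,t)" by (cases j)
  define \<alpha> where "\<alpha> = (\<lambda>x y. sg u x * sg v y / V x y)"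
  define \<beta> where "\<beta> = (\<lambda>x y. sg s x * sg t y / (4 * lam W s t))"
  define \<gamma> where "\<gamma> = (\<lambda>x y. if x then 0 else cnj (X False y))"
  have g: "pair2 \<gamma> X = 1" using uni_row[OF u, of False False]
    unfolding pair2_def \<gamma>_def by (simp add: sum_bool mult.commute)
  have inn: "(\<Sum>b\<in>UNIV. \<Sum>b'\<in>UNIV. \<beta> b b' * W (b \<noteq> a) (b' \<noteq> a')) = sg s a * sg t a' / 4" for a a'
  proof -
    have "(\<Sum>b\<in>UNIV. \<Sum>b'\<in>UNIV. \<beta> b b' * W (b \<noteq> a) (b' \<noteq> a')) =
       (\<Sum>b\<in>UNIV. \<Sum>b'\<in>UNIV. sg s b * sg t b' * W (b \<noteq> a) (b' \<noteq> a')) / (4 * lam W s t)"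
      unfolding \<beta>_def by (simp add: sum_divide_distrib)
    also have "\<dots> = sg s a * sg t a' / 4" unfolding inner_S using nzl[of s t] by simp
    finally show ?thesis .
  qed
  have out: "\<alpha> a a' * V a a' = sg u a * sg v a'" for a a' unfolding \<alpha>_def using nzV[of a a'] by simp
  have "pair3 \<alpha> \<beta> \<gamma> (TSf V W X) = (if (u,v) = (s,t) then 1 else 0)"
    unfolding factor_S g inn out
    by (cases u; cases v; cases s; cases t) (simp_all add: sum_bool sg_def)
  then show "pair3 ((\<lambda>(u,v). \<lambda>x y. sg u x * sg v y / V x y) i) ((\<lambda>(s,t). \<lambda>x y. sg s x * sg t y / (4 * lam W s t)) j)
     ((\<lambda>_. \<lambda>x y. if x then 0 else cnj (X False y)) i) (TSf V W X) = (if i = j then 1 else 0)"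
    unfolding i j \<alpha>_def \<beta>_def \<gamma>_def by simp
qed


lemma TS_diag: "V False True = 0 \<Longrightarrow> V True False = 0 \<Longrightarrow> dec (TSf V W X) 2"
  apply (rule dec2J[where Aa="\<lambda>x y. if x = y \<and> \<not> x then V x y else 0" and Ba = W and Ca = X
     and Ab = "\<lambda>x y. if x = y \<and> x then V x y else 0" and Bb = "\<lambda>x y. W (\<not> x) (\<not> y)" and Cb = X])
  apply (rule ext8) subgoal for a b c a' b' c' by (cases a; cases b; cases a'; cases b') (auto simp: TSf_def tensor3_def)
  done

lemma TS_anti: "V False False = 0 \<Longrightarrow> V True True = 0 \<Longrightarrow> dec (TSf V W X) 2"
  apply (rule dec2J[where Aa="\<lambda>x y. if \<not> x \<and> y then V x y else 0" and Ba = "\<lambda>x y. W x (\<not> y)" and Ca = X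
     and Ab = "\<lambda>x y. if x \<and> \<not> y then V x y else 0" and Bb = "\<lambda>x y. W (\<not> x) y" and Cb = X])
  apply (rule ext8) subgoal for a b c a' b' c' by (cases a; cases b; cases a'; cases b') (auto simp: TSf_def tensor3_def)
  done

lemma TS_acomm: "W True True = - W False False \<Longrightarrow> W True False = - W False True \<Longrightarrow> dec (TSf V W X) 2"
  apply (rule dec2J[where Aa="\<lambda>x y. if x = y then (if x then - V x y else V x y) else 0" and Ba = W and Ca = X
     and Ab = "\<lambda>x y. if x \<noteq> y then (if x then - V x y else V x y) else 0" and Bb = "\<lambda>x y. W x (\<not> y)" and Cb = X])
  apply (rule ext8) subgoal for a b c a' b' c' by (cases a; cases b; cases a'; cases b') (auto simp: TSf_def tensor3_def)
  done

lemma TS_comm: "W True True = W False False \<Longrightarrow> W True False = W False True \<Longrightarrow> dec (TSf V W X) 2"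
  apply (rule dec2J[where Aa="\<lambda>x y. if x = y then V x y else 0" and Ba = W and Ca = X
     and Ab = "\<lambda>x y. if x \<noteq> y then V x y else 0" and Bb = "\<lambda>x y. W x (\<not> y)" and Cb = X])
  apply (rule ext8) subgoal for a b c a' b' c' by (cases a; cases b; cases a'; cases b') (auto simp: TSf_def tensor3_def)
  done

lemma QS: "Q 0 1 0 1"
  unfolding Q_def
proof (intro allI impI)
  fix V W X assume u: "unitary2 V" "unitary2 W" "unitary2 X"
  have T: "mmul8 (cnot 0 1) (mmul8 (tensor3 V W X) (cnot 0 1)) = TSf V W X"
    unfolding TS_formula TSf_def ..
  have nz: "TSf V W X \<noteq> (\<lambda>i j. 0)" using TS_nz[OF u] .
  have "schmidt_rank (TSf V W X) \<in> {1,2,4}"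
  proof (cases "\<forall>x y. V x y \<noteq> 0")
    case False
    then have "V False False = 0 \<or> V False True = 0 \<or> V True False = 0 \<or> V True True = 0"
      by (metis (full_types))
    from zero_struct[OF u(1) this] have "dec (TSf V W X) 2" using TS_diag TS_anti by blast
    then show ?thesis using rank12[OF _ nz] by auto
  next
    case nzV: True
    show ?thesis
    proof (cases "\<forall>s t. lam W s t \<noteq> 0")
      case True
      have "schmidt_rank (TSf V W X) = 4"
        by (rule rank4[OF TS_dec4 TS_lower[OF u(3)]]) (use nzV True in auto)
      then show ?thesis by simp
    next
      case False
      then obtain s t where "lam W s t = 0" by blast
      from lam_zero[OF u(2) this] have "dec (TSf V W X) 2" using TS_acomm TS_comm by blast
      then show ?thesis using rank12[OF _ nz] by auto
    qed
  qed
  then show "schmidt_rank (mmul8 (cnot 0 1) (mmul8 (tensor3 V W X) (cnot 0 1))) \<in> {1,2,4}"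
    unfolding T .
qed


definition TDf :: "mat2 \<Rightarrow> mat2 \<Rightarrow> mat2 \<Rightarrow> mat8" where
  "TDf V W X = (\<lambda>(a,b,c) (a',b',c'). V (a \<noteq> b) a' * W b b' * X c (c' \<noteq> b'))"

lemma TD_nz: assumes "unitary2 V" "unitary2 W" "unitary2 X" shows "TDf V W X \<noteq> (\<lambda>i j. 0)"
proof
  obtain x y z where n: "V False x \<noteq> 0" "W False y \<noteq> 0" "X False z \<noteq> 0" using exists_nz assms by metis
  assume "TDf V W X = (\<lambda>i j. 0)"
  then have "TDf V W X (False, False, False) (x, y, z \<noteq> y) = 0" by simp
  then show False using n unfolding TDf_def by (cases z; cases y) auto
qed

lemma TD_dec4: "dec (TDf V W X) 4"
  apply (rule dec4I[where Aa="\<lambda>x y. V x y" and Ba = "\<lambda>x y. if x = False \<and> y = False then W x y else 0" and Ca = X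
    and Ab="\<lambda>x y. V x y" and Bb = "\<lambda>x y. if x = False \<and> y = True then W x y else 0" and Cb = "\<lambda>x y. X x (\<not> y)"
    and Ac="\<lambda>x y. V (\<not> x) y" and Bc = "\<lambda>x y. if x = True \<and> y = False then W x y else 0" and Cc = X
    and Ad="\<lambda>x y. V (\<not> x) y" and Bd = "\<lambda>x y. if x = True \<and> y = True then W x y else 0" and Cd = "\<lambda>x y. X x (\<not> y)"])
  apply (rule ext8) subgoal for a b c a' b' c' by (cases a; cases b; cases a'; cases b') (auto simp: TDf_def tensor3_def)
  done

lemma TD_diag: "W False True = 0 \<Longrightarrow> W True False = 0 \<Longrightarrow> dec (TDf V W X) 2"
  apply (rule dec2J[where Aa=V and Ba = "\<lambda>x y. if \<not> x \<and> \<not> y then W x y else 0" and Ca = X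
     and Ab = "\<lambda>x y. V (\<not> x) y" and Bb = "\<lambda>x y. if x \<and> y then W x y else 0" and Cb = "\<lambda>x y. X x (\<not> y)"])
  apply (rule ext8) subgoal for a b c a' b' c' by (cases a; cases b; cases a'; cases b') (auto simp: TDf_def tensor3_def)
  done

lemma TD_anti: "W False False = 0 \<Longrightarrow> W True True = 0 \<Longrightarrow> dec (TDf V W X) 2"
  apply (rule dec2J[where Aa=V and Ba = "\<lambda>x y. if \<not> x \<and> y then W x y else 0" and Ca = "\<lambda>x y. X x (\<not> y)"
     and Ab = "\<lambda>x y. V (\<not> x) y" and Bb = "\<lambda>x y. if x \<and> \<not> y then W x y else 0" and Cb = X])
  apply (rule ext8) subgoal for a b c a' b' c' by (cases a; cases b; cases a'; cases b') (auto simp: TDf_def tensor3_def)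
  done

lemma factor_D: "pair3 \<alpha> \<beta> \<gamma> (TDf V W X) =
   (\<Sum>b\<in>UNIV. \<Sum>b'\<in>UNIV. \<beta> b b' * W b b' * (\<Sum>a\<in>UNIV. \<Sum>a'\<in>UNIV. \<alpha> a a' * V (a \<noteq> b) a') *
      (\<Sum>c\<in>UNIV. \<Sum>c'\<in>UNIV. \<gamma> c c' * X c (c' \<noteq> b')))"
  unfolding pair3_def pair2_def pw_def TDf_def by (simp add: sum_idx3 sum_bool algebra_simps)

lemma TD_lower:
  assumes uV: "unitary2 V" and uX: "unitary2 X" and nzW: "\<And>x y. W x y \<noteq> 0"
    and d: "dec (TDf V W X) r"
  shows "4 \<le> r"
proof (rule lower4[OF d])
  fix i j :: "bool \<times> bool"
  obtain u v where i: "i = (u,v)" by (cases i)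
  obtain s t where j: "j = (s,t)" by (cases j)
  define \<alpha> where "\<alpha> = (\<lambda>x y. if x = u then cnj (V False y) else 0)"
  define \<beta> where "\<beta> = (\<lambda>x y. if x = s \<and> y = t then 1 / W x y else 0)"
  define \<gamma> where "\<gamma> = (\<lambda>x y. if y = v then cnj (X x False) else 0)"
  have A: "(\<Sum>a\<in>UNIV. \<Sum>a'\<in>UNIV. \<alpha> a a' * V (a \<noteq> b) a') = (if u = b then 1 else 0)" for b
    using uni_row[OF uV, of "u \<noteq> b" False] unfolding \<alpha>_def
    by (cases u; cases b) (simp_all add: sum_bool mult.commute)
  have C: "(\<Sum>c\<in>UNIV. \<Sum>c'\<in>UNIV. \<gamma> c c' * X c (c' \<noteq> b')) = (if v = b' then 1 else 0)" for b'
    using uni_col[OF uX, of False "v \<noteq> b'"] unfolding \<gamma>_def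
    by (cases v; cases b') (simp_all add: sum_bool mult.commute)
  have "pair3 \<alpha> \<beta> \<gamma> (TDf V W X) = (if (u,v) = (s,t) then 1 else 0)"
    unfolding factor_D A C \<beta>_def
    using nzW by (cases u; cases v; cases s; cases t) (simp_all add: sum_bool)
  then show "pair3 ((\<lambda>(u,v). \<lambda>x y. if x = u then cnj (V False y) else 0) i) ((\<lambda>(s,t). \<lambda>x y. if x = s \<and> y = t then 1 / W x y else 0) j)
     ((\<lambda>(u,v). \<lambda>x y. if y = v then cnj (X x False) else 0) i) (TDf V W X) = (if i = j then 1 else 0)"
    unfolding i j \<alpha>_def \<beta>_def \<gamma>_def by simp
qed

lemma QD: "Q 1 0 1 2"
  unfolding Q_def
proof (intro allI impI)
  fix V W X assume u: "unitary2 V" "unitary2 W" "unitary2 X"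
  have T: "mmul8 (cnot 1 0) (mmul8 (tensor3 V W X) (cnot 1 2)) = TDf V W X"
    unfolding TD_formula TDf_def ..
  have nz: "TDf V W X \<noteq> (\<lambda>i j. 0)" using TD_nz[OF u] .
  have "schmidt_rank (TDf V W X) \<in> {1,2,4}"
  proof (cases "\<forall>x y. W x y \<noteq> 0")
    case False
    then have "W False False = 0 \<or> W False True = 0 \<or> W True False = 0 \<or> W True True = 0"
      by (metis (full_types))
    from zero_struct[OF u(2) this] have "dec (TDf V W X) 2" using TD_diag TD_anti by blast
    then show ?thesis using rank12[OF _ nz] by auto
  next
    case True
    have "schmidt_rank (TDf V W X) = 4"
      by (rule rank4[OF TD_dec4 TD_lower[OF u(1) u(3)]]) (use True in auto)
    then show ?thesis by simp
  qed
  then show "schmidt_rank (mmul8 (cnot 1 0) (mmul8 (tensor3 V W X) (cnot 1 2))) \<in> {1,2,4}"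
    unfolding T .
qed


lemma Q_all:
  assumes "c1 < 3" "t1 < 3" "c1 \<noteq> t1" "c2 < 3" "t2 < 3" "c2 \<noteq> t2"
  shows "Q c1 t1 c2 t2"
proof -
  have q0101: "Q 0 1 0 1" by (rule QS)
  have q1012: "Q 1 0 1 2" by (rule QD)
  have q1010: "Q 1 0 1 0" using Q_P01[OF q0101] by (simp add: s01_def)
  have q0202: "Q 0 2 0 2" using Q_P12[OF q0101] by (simp add: s12_def)
  have q0102: "Q 0 1 0 2" using Q_P01[OF q1012] by (simp add: s01_def)
  have q2021: "Q 2 0 2 1" using Q_P12[OF q1012] by (simp add: s12_def)
  have q2020: "Q 2 0 2 0" using Q_P12[OF q1010] by (simp add: s12_def)
  have q1212: "Q 1 2 1 2" using Q_P01[OF q0202] by (simp add: s01_def)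
  have q0201: "Q 0 2 0 1" using Q_P12[OF q0102] by (simp add: s12_def)
  have q2120: "Q 2 1 2 0" using Q_P01[OF q2021] by (simp add: s01_def)
  have q2121: "Q 2 1 2 1" using Q_P01[OF q2020] by (simp add: s01_def)
  have q1210: "Q 1 2 1 0" using Q_P01[OF q0201] by (simp add: s01_def)
  have q0110: "Q 0 1 1 0" by (rule Q_flip2[of 0 1 0 1, OF _ _ _ q0101]) simp_all
  have q0112: "Q 0 1 1 2" by (rule Q_flip1[of 1 0 1 2, OF _ _ _ q1012]) simp_all
  have q0120: "Q 0 1 2 0" by (rule Q_flip2[of 0 2 0 1, OF _ _ _ q0102]) simp_all
  have q0121: "Q 0 1 2 1" by (rule Q_flip1[of 1 0 2 1, OF _ _ _ Q_flip2[of 1 2 1 0, OF _ _ _ q1012]]) simp_all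
  have q0210: "Q 0 2 1 0" by (rule Q_flip2[of 0 1 0 2, OF _ _ _ q0201]) simp_all
  have q0212: "Q 0 2 1 2" by (rule Q_flip1[of 2 0 1 2, OF _ _ _ Q_flip2[of 2 1 2 0, OF _ _ _ q2021]]) simp_all
  have q0220: "Q 0 2 2 0" by (rule Q_flip2[of 0 2 0 2, OF _ _ _ q0202]) simp_all
  have q0221: "Q 0 2 2 1" by (rule Q_flip1[of 2 0 2 1, OF _ _ _ q2021]) simp_all
  have q1001: "Q 1 0 0 1" by (rule Q_flip2[of 1 0 1 0, OF _ _ _ q1010]) simp_all
  have q1002: "Q 1 0 0 2" by (rule Q_flip1[of 0 1 0 2, OF _ _ _ q0102]) simp_all
  have q1020: "Q 1 0 2 0" by (rule Q_flip1[of 0 1 2 0, OF _ _ _ Q_flip2[of 0 2 0 1, OF _ _ _ q0102]]) simp_all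
  have q1021: "Q 1 0 2 1" by (rule Q_flip2[of 1 2 1 0, OF _ _ _ q1012]) simp_all
  have q1201: "Q 1 2 0 1" by (rule Q_flip2[of 1 0 1 2, OF _ _ _ q1210]) simp_all
  have q1202: "Q 1 2 0 2" by (rule Q_flip1[of 2 1 0 2, OF _ _ _ Q_flip2[of 2 0 2 1, OF _ _ _ q2120]]) simp_all
  have q1220: "Q 1 2 2 0" by (rule Q_flip1[of 2 1 2 0, OF _ _ _ q2120]) simp_all
  have q1221: "Q 1 2 2 1" by (rule Q_flip2[of 1 2 1 2, OF _ _ _ q1212]) simp_all
  have q2001: "Q 2 0 0 1" by (rule Q_flip1[of 0 2 0 1, OF _ _ _ q0201]) simp_all
  have q2002: "Q 2 0 0 2" by (rule Q_flip2[of 2 0 2 0, OF _ _ _ q2020]) simp_all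
  have q2010: "Q 2 0 1 0" by (rule Q_flip1[of 0 2 1 0, OF _ _ _ Q_flip2[of 0 1 0 2, OF _ _ _ q0201]]) simp_all
  have q2012: "Q 2 0 1 2" by (rule Q_flip2[of 2 1 2 0, OF _ _ _ q2021]) simp_all
  have q2101: "Q 2 1 0 1" by (rule Q_flip1[of 1 2 0 1, OF _ _ _ Q_flip2[of 1 0 1 2, OF _ _ _ q1210]]) simp_all
  have q2102: "Q 2 1 0 2" by (rule Q_flip2[of 2 0 2 1, OF _ _ _ q2120]) simp_all
  have q2110: "Q 2 1 1 0" by (rule Q_flip1[of 1 2 1 0, OF _ _ _ q1210]) simp_all
  have q2112: "Q 2 1 1 2" by (rule Q_flip2[of 2 1 2 1, OF _ _ _ q2121]) simp_all
  have "c1 \<in> {0,1,2}" "t1 \<in> {0,1,2}" "c2 \<in> {0,1,2}" "t2 \<in> {0,1,2}" using assms by auto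
  then show ?thesis using assms q0101 q0102 q0110 q0112 q0120 q0121 q0201 q0202 q0210 q0212 q0220 q0221 q1001 q1002 q1010 q1012 q1020 q1021 q1201 q1202 q1210 q1212 q1220 q1221 q2001 q2002 q2010 q2012 q2020 q2021 q2101 q2102 q2110 q2112 q2120 q2121 by auto
qed


theorem theorem6:
  fixes L1 L2 L3 C1 C2 :: mat8
  assumes "local_unitary L1" and "local_unitary L2" and "local_unitary L3"
    and "is_cnot C1" and "is_cnot C2"
  shows "schmidt_rank (mmul8 L1 (mmul8 C1 (mmul8 L2 (mmul8 C2 L3)))) \<in> {1, 2, 4}"
proof -
  obtain V1 W1 X1 where l1: "unitary2 V1" "unitary2 W1" "unitary2 X1" "L1 = tensor3 V1 W1 X1"
    using assms(1) unfolding local_unitary_def by blast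
  obtain V2 W2 X2 where l2: "unitary2 V2" "unitary2 W2" "unitary2 X2" "L2 = tensor3 V2 W2 X2"
    using assms(2) unfolding local_unitary_def by blast
  obtain V3 W3 X3 where l3: "unitary2 V3" "unitary2 W3" "unitary2 X3" "L3 = tensor3 V3 W3 X3"
    using assms(3) unfolding local_unitary_def by blast
  obtain c1 t1 where c1: "c1 < 3" "t1 < 3" "c1 \<noteq> t1" "C1 = cnot c1 t1"
    using assms(4) unfolding is_cnot_def by blast
  obtain c2 t2 where c2: "c2 < 3" "t2 < 3" "c2 \<noteq> t2" "C2 = cnot c2 t2"
    using assms(5) unfolding is_cnot_def by blast
  have "schmidt_rank (mmul8 L1 (mmul8 C1 (mmul8 L2 (mmul8 C2 L3)))) =
        schmidt_rank (mmul8 C1 (mmul8 L2 (mmul8 C2 L3)))"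
    unfolding l1(4) by (rule rank_left[OF l1(1-3)])
  also have "\<dots> = schmidt_rank (mmul8 (mmul8 C1 (mmul8 L2 C2)) L3)"
    by (simp add: mmul8_assoc)
  also have "\<dots> = schmidt_rank (mmul8 C1 (mmul8 L2 C2))"
    unfolding l3(4) by (rule rank_right[OF l3(1-3)])
  also have "\<dots> \<in> {1,2,4}"
    using Q_all[OF c1(1-3) c2(1-3)] l2 unfolding Q_def c1(4) c2(4) by blast
  finally show ?thesis .
qed

end
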